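(* Let $c,d$ be positive integers, $\alpha,\delta\in(0,1]$, and $C_0\subseteq\mathbb{F}_2^d$ a linear code with minimum distance $d_0$, all constants, with $d_0\delta>2$; let $\varepsilon_0=\frac{d_0}{2}-\frac1\delta>0$. Let $G=(L\cup R,E)$ be a $(c,d,\alpha,\delta)$-bipartite expander with $L=[n]$, let $x\in\mathbb{F}_2^n$ and $y\in T(G,C_0)$ with $d_H(x,y)\le\alpha n$. Consider the algorithm $\mathsf{RandDecode}$ which, on input $x$, repeatedly replaces $x$ by $\mathsf{RandFlip}(x)$ as long as $U(x)\neq\emptyset$, and then returns $x$. Then, on input $x$, $\mathsf{RandDecode}$ outputs $y$ in $O(n)$ time with probability $1-o(1)$.
   Context: Binary linear codes; $d_H$ Hamming distance. A bipartite graph $G=(L\cup R,E)$ is $(c,d)$-regular if left vertices have degree $c$ and right vertices degree $d$; $N(S)$ denotes the neighborhood of a vertex set $S$. A $(c,d,\alpha,\delta)$-bipartite expander is a $(c,d)$-regular bipartite graph with $|N(S)|\ge\delta c|S|$ for all $S\subseteq L$, $|S|\le\alpha|L|$. Tanner code: $L=[n]$; for each $v\in R$ a fixed ordering of $N(v)$ gives $x_{N(v)}\in\mathbb{F}_2^d$ (restriction of $x$ to $N(v)$); $T(G,C_0)=\{x\in\mathbb{F}_2^n: x_{N(v)}\in C_0\ \forall v\in R\}$. $U(x)=\{v\in R: x_{N(v)}\notin C_0\}$ (unsatisfied checks). For $z\in\mathbb{F}_2^d$, $\mathsf{Decode}(z)$ is the codeword of $C_0$ closest to $z$ in Hamming distance,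 ties broken by the lexicographically smallest. $\mathsf{RandFlip}(x)$: set $t=d_0/2$ and $p_1=\dots=p_n=0$; for each $v\in R$, let $w_v=\mathsf{Decode}(x_{N(v)})$; if $1\le d_H(w_v,x_{N(v)})<t$, let $i$ be the smallest element of $N(v)$ at which $w_v$ and $x_{N(v)}$ differ and increase $p_i$ by $\frac{t-d_H(w_v,x_{N(v)})}{ct}$. Then flip each $x_i$ independently with probability $p_i$ and return the result. The parameters $c,d,\alpha,\delta,C_0$ are constants, $n$ grows, and $o(1)$, $O(n)$ are with respect to $n$. Running time is in the RAM model with adjacency lists, with the implementation in which $U(x)$ and the values $p_i$ are maintained in data structures (initialized once in $O(n)$ time) allowing $U(x)$ to be enumerated in $O(|U(x)|)$ time and updated in $O(1)$ time per bit flip, so that only unsatisfied checks and indices with $p_i\neq0$ are enumerated. *)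

theory Defs
  imports "HOL-Probability.Probability"
begin

(* Binary words of length d are bool lists (False = 0, True = 1).
   Words in F_2^n are functions nat => bool, only the coordinates in {..<n} matter. *)

definition hdist :: "bool list \<Rightarrow> bool list \<Rightarrow> nat" where
  "hdist u w = card {j. j < length u \<and> u ! j \<noteq> w ! j}"

definition hdist_n :: "nat \<Rightarrow> (nat \<Rightarrow> bool) \<Rightarrow> (nat \<Rightarrow> bool) \<Rightarrow> nat" where
  "hdist_n n x y = card {i. i < n \<and> x i \<noteq> y i}"

definition linear_code :: "nat \<Rightarrow> bool list set \<Rightarrow> bool" where
  "linear_code d C0 \<longleftrightarrow> C0 \<subseteq> {w. length w = d} \<and> replicate d False \<in> C0 \<and>
     (\<forall>u\<in>C0. \<forall>w\<in>C0. map2 (\<noteq>) u w \<in> C0)"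

definition min_distance :: "bool list set \<Rightarrow> nat \<Rightarrow> bool" where
  "min_distance C0 d0 \<longleftrightarrow>
     (\<exists>u\<in>C0. \<exists>w\<in>C0. u \<noteq> w \<and> hdist u w = d0) \<and>
     (\<forall>u\<in>C0. \<forall>w\<in>C0. u \<noteq> w \<longrightarrow> d0 \<le> hdist u w)"

definition lex_le :: "bool list \<Rightarrow> bool list \<Rightarrow> bool" where
  "lex_le u w \<longleftrightarrow> u = w \<or> (u, w) \<in> lexord {(False, True)}"

definition decode :: "bool list set \<Rightarrow> bool list \<Rightarrow> bool list" where
  "decode C0 z = (THE w. w \<in> C0 \<and>
     (\<forall>u\<in>C0. hdist w z < hdist u z \<or> (hdist w z = hdist u z \<and> lex_le w u)))"

(* Bipartite graph: L = {..<n}, right vertices R :: nat set,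
   nb v = the fixed ordering of N(v) for v in R. *)
definition biregular :: "nat \<Rightarrow> nat set \<Rightarrow> (nat \<Rightarrow> nat list) \<Rightarrow> nat \<Rightarrow> nat \<Rightarrow> bool" where
  "biregular n R nb c d \<longleftrightarrow> finite R \<and>
     (\<forall>v\<in>R. length (nb v) = d \<and> distinct (nb v) \<and> set (nb v) \<subseteq> {..<n}) \<and>
     (\<forall>i<n. card {v\<in>R. i \<in> set (nb v)} = c)"

definition nbhd :: "nat set \<Rightarrow> (nat \<Rightarrow> nat list) \<Rightarrow> nat set \<Rightarrow> nat set" where
  "nbhd R nb S = {v\<in>R. set (nb v) \<inter> S \<noteq> {}}"

definition bip_expander ::
  "nat \<Rightarrow> nat set \<Rightarrow> (nat \<Rightarrow> nat list) \<Rightarrow> nat \<Rightarrow> nat \<Rightarrow> real \<Rightarrow> real \<Rightarrow> bool" where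
  "bip_expander n R nb c d \<alpha> \<delta> \<longleftrightarrow> biregular n R nb c d \<and>
     (\<forall>S. S \<subseteq> {..<n} \<and> real (card S) \<le> \<alpha> * real n \<longrightarrow>
        real (card (nbhd R nb S)) \<ge> \<delta> * real c * real (card S))"

definition tanner :: "nat set \<Rightarrow> (nat \<Rightarrow> nat list) \<Rightarrow> bool list set \<Rightarrow> (nat \<Rightarrow> bool) set" where
  "tanner R nb C0 = {x. \<forall>v\<in>R. map x (nb v) \<in> C0}"

definition unsat :: "nat set \<Rightarrow> (nat \<Rightarrow> nat list) \<Rightarrow> bool list set \<Rightarrow> (nat \<Rightarrow> bool) \<Rightarrow> nat set" where
  "unsat R nb C0 x = {v\<in>R. map x (nb v) \<notin> C0}"

definition flip_contrib ::
  "(nat \<Rightarrow> nat list) \<Rightarrow> bool list set \<Rightarrow> nat \<Rightarrow> nat \<Rightarrow> (nat \<Rightarrow> bool) \<Rightarrow> nat \<Rightarrow> nat \<Rightarrow> real" where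
  "flip_contrib nb C0 c d0 x v i =
     (let z = map x (nb v); w = decode C0 z; h = hdist w z; t = real d0 / 2 in
      if 1 \<le> h \<and> real h < t \<and>
         i = Min {nb v ! j | j. j < length (nb v) \<and> w ! j \<noteq> z ! j}
      then (t - real h) / (real c * t) else 0)"

definition flip_prob ::
  "nat set \<Rightarrow> (nat \<Rightarrow> nat list) \<Rightarrow> bool list set \<Rightarrow> nat \<Rightarrow> nat \<Rightarrow> (nat \<Rightarrow> bool) \<Rightarrow> nat \<Rightarrow> real" where
  "flip_prob R nb C0 c d0 x i = (\<Sum>v\<in>R. flip_contrib nb C0 c d0 x v i)"

definition rand_flip ::
  "nat \<Rightarrow> nat set \<Rightarrow> (nat \<Rightarrow> nat list) \<Rightarrow> bool list set \<Rightarrow> nat \<Rightarrow> nat \<Rightarrow> (nat \<Rightarrow> bool) \<Rightarrow> (nat \<Rightarrow> bool) pmf" where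
  "rand_flip n R nb C0 c d0 x =
     map_pmf (\<lambda>f i. x i \<noteq> f i)
       (Pi_pmf {..<n} False (\<lambda>i. bernoulli_pmf (flip_prob R nb C0 c d0 x i)))"

(* One round of RandDecode on a state (x, time spent so far).  A round with
   U(x) nonempty costs |U(x)| + 1 (enumerating U(x); the indices with p_i \<noteq> 0
   and the flipped bits are at most |U(x)| many). *)
definition rd_step ::
  "nat \<Rightarrow> nat set \<Rightarrow> (nat \<Rightarrow> nat list) \<Rightarrow> bool list set \<Rightarrow> nat \<Rightarrow> nat \<Rightarrow>
   (nat \<Rightarrow> bool) \<times> nat \<Rightarrow> ((nat \<Rightarrow> bool) \<times> nat) pmf" where
  "rd_step n R nb C0 c d0 s =
     (case s of (x, k) \<Rightarrow>
        if unsat R nb C0 x = {} then return_pmf (x, k)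
        else map_pmf (\<lambda>x'. (x', k + card (unsat R nb C0 x) + 1)) (rand_flip n R nb C0 c d0 x))"

(* distribution of (current word, time spent) after N rounds of RandDecode on input x;
   the initialization costs n *)
definition rand_decode_run ::
  "nat \<Rightarrow> nat set \<Rightarrow> (nat \<Rightarrow> nat list) \<Rightarrow> bool list set \<Rightarrow> nat \<Rightarrow> nat \<Rightarrow> nat \<Rightarrow>
   (nat \<Rightarrow> bool) \<Rightarrow> ((nat \<Rightarrow> bool) \<times> nat) pmf" where
  "rand_decode_run n R nb C0 c d0 N x =
     ((\<lambda>D. bind_pmf D (rd_step n R nb C0 c d0)) ^^ N) (return_pmf (x, n))"

end

theory Submission
  imports Defs
begin


lemma finite_set_Pi_pmf_bool:
  assumes "finite A"
  shows "finite (set_pmf (Pi_pmf A False (P :: nat \<Rightarrow> bool pmf)))"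
proof (rule finite_subset[OF set_Pi_pmf_subset[OF assms]])
  have "{f. \<forall>x. x \<notin> A \<longrightarrow> f x = False} = PiE_dflt A False (\<lambda>_. UNIV :: bool set)"
    by (auto simp: PiE_dflt_def)
  then show "finite {f. \<forall>x. x \<notin> A \<longrightarrow> f x = (False::bool)}"
    using assms by auto
qed

lemma expectation_Pi_pmf_insert:
  fixes h :: "(nat \<Rightarrow> bool) \<Rightarrow> real"
  assumes "finite A" "a \<notin> A" "0 \<le> p a" "p a \<le> 1"
  shows "measure_pmf.expectation (Pi_pmf (insert a A) False (\<lambda>i. bernoulli_pmf (p i))) h =
     p a * measure_pmf.expectation (Pi_pmf A False (\<lambda>i. bernoulli_pmf (p i))) (\<lambda>f. h (f(a:=True)))
   + (1 - p a) * measure_pmf.expectation (Pi_pmf A False (\<lambda>i. bernoulli_pmf (p i))) (\<lambda>f. h (f(a:=False)))"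
proof -
  let ?Q = "Pi_pmf A False (\<lambda>i. bernoulli_pmf (p i))"
  have "Pi_pmf (insert a A) False (\<lambda>i. bernoulli_pmf (p i)) =
        bind_pmf (bernoulli_pmf (p a)) (\<lambda>y. map_pmf (\<lambda>f. f(a:=y)) ?Q)"
    using assms by (subst Pi_pmf_insert') (auto simp: map_pmf_def)
  then have "measure_pmf.expectation (Pi_pmf (insert a A) False (\<lambda>i. bernoulli_pmf (p i))) h =
     measure_pmf.expectation (bind_pmf (bernoulli_pmf (p a)) (\<lambda>y. map_pmf (\<lambda>f. f(a:=y)) ?Q)) h"
    by simp
  also have "\<dots> = (\<Sum>y\<in>UNIV. pmf (bernoulli_pmf (p a)) y *\<^sub>R measure_pmf.expectation (map_pmf (\<lambda>f. f(a:=y)) ?Q) h)"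
    using assms finite_set_Pi_pmf_bool[OF assms(1)]
    by (intro pmf_expectation_bind) auto
  finally show ?thesis
    using assms by (simp add: UNIV_bool)
qed

lemma integrable_Pi_pmf_bool[simp]:
  "finite A \<Longrightarrow> integrable (measure_pmf (Pi_pmf A False (P :: nat \<Rightarrow> bool pmf))) (h :: _ \<Rightarrow> real)"
  by (rule integrable_measure_pmf_finite[OF finite_set_Pi_pmf_bool])

lemma expectation_Pi_pmf_sum:
  fixes X :: "nat \<Rightarrow> bool \<Rightarrow> real"
  assumes "finite A" "\<And>i. i \<in> A \<Longrightarrow> 0 \<le> p i \<and> p i \<le> 1"
  shows "measure_pmf.expectation (Pi_pmf A False (\<lambda>i. bernoulli_pmf (p i))) (\<lambda>f. \<Sum>i\<in>A. X i (f i))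
     = (\<Sum>i\<in>A. p i * X i True + (1 - p i) * X i False)
   \<and> measure_pmf.expectation (Pi_pmf A False (\<lambda>i. bernoulli_pmf (p i)))
       (\<lambda>f. ((\<Sum>i\<in>A. X i (f i)) - (\<Sum>i\<in>A. p i * X i True + (1 - p i) * X i False))^2)
     = (\<Sum>i\<in>A. p i * (X i True - (p i * X i True + (1 - p i) * X i False))^2
                 + (1 - p i) * (X i False - (p i * X i True + (1 - p i) * X i False))^2)"
  using assms
proof (induction A rule: finite_induct)
  case empty
  then show ?case by simp
next
  case (insert a A)
  let ?Q = "Pi_pmf A False (\<lambda>i. bernoulli_pmf (p i))"
  let ?E = "measure_pmf.expectation ?Q"
  define mu where "mu = (\<lambda>i. p i * X i True + (1 - p i) * X i False)"
  define S where "S = (\<lambda>f. \<Sum>i\<in>A. X i (f i))"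
  have pa: "0 \<le> p a" "p a \<le> 1" using insert by auto
  have IH1: "?E S = (\<Sum>i\<in>A. mu i)" and
       IH2: "?E (\<lambda>f. (S f - (\<Sum>i\<in>A. mu i))^2) =
      (\<Sum>i\<in>A. p i * (X i True - mu i)^2 + (1 - p i) * (X i False - mu i)^2)"
    using insert by (auto simp: mu_def S_def)
  have upd: "(\<Sum>i\<in>insert a A. X i ((f(a:=v)) i)) = X a v + S f" for f v
  proof -
    have "(\<Sum>i\<in>A. X i ((f(a:=v)) i)) = S f"
      unfolding S_def using insert.hyps by (intro sum.cong) auto
    then show ?thesis using insert.hyps by simp
  qed
  have E1: "?E (\<lambda>f. X a v + S f) = X a v + (\<Sum>i\<in>A. mu i)" for v
    using insert.hyps IH1 by (subst Bochner_Integration.integral_add) auto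
  have E2: "?E (\<lambda>f. (X a v + S f - (\<Sum>i\<in>insert a A. mu i))^2) =
            (X a v - mu a)^2 + (\<Sum>i\<in>A. p i * (X i True - mu i)^2 + (1 - p i) * (X i False - mu i)^2)" for v
  proof -
    have eq: "(X a v + S f - (\<Sum>i\<in>insert a A. mu i))^2 =
          (X a v - mu a)^2 + 2 * (X a v - mu a) * (S f - (\<Sum>i\<in>A. mu i)) + (S f - (\<Sum>i\<in>A. mu i))^2" for f
      using insert.hyps by (simp add: power2_eq_square algebra_simps)
    have "?E (\<lambda>f. S f - (\<Sum>i\<in>A. mu i)) = 0"
      using insert.hyps IH1 by (subst Bochner_Integration.integral_diff) auto
    then show ?thesis
      unfolding eq using insert.hyps IH2
      by (simp add: Bochner_Integration.integral_add)
  qed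
  let ?E' = "measure_pmf.expectation (Pi_pmf (insert a A) False (\<lambda>i. bernoulli_pmf (p i)))"
  have C1: "?E' (\<lambda>f. \<Sum>i\<in>insert a A. X i (f i)) = (\<Sum>i\<in>insert a A. mu i)"
  proof -
    have "?E' (\<lambda>f. \<Sum>i\<in>insert a A. X i (f i)) =
        p a * ?E (\<lambda>f. X a True + S f) + (1 - p a) * ?E (\<lambda>f. X a False + S f)"
      by (subst expectation_Pi_pmf_insert[where p=p, OF insert.hyps pa]) (simp only: upd)
    also have "\<dots> = (\<Sum>i\<in>insert a A. mu i)"
      unfolding E1 using insert.hyps by (simp add: mu_def algebra_simps)
    finally show ?thesis .
  qed
  have C2: "?E' (\<lambda>f. ((\<Sum>i\<in>insert a A. X i (f i)) - (\<Sum>i\<in>insert a A. mu i))^2) =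
      (\<Sum>i\<in>insert a A. p i * (X i True - mu i)^2 + (1 - p i) * (X i False - mu i)^2)"
  proof -
    have "?E' (\<lambda>f. ((\<Sum>i\<in>insert a A. X i (f i)) - (\<Sum>i\<in>insert a A. mu i))^2) =
        p a * ?E (\<lambda>f. (X a True + S f - (\<Sum>i\<in>insert a A. mu i))^2)
      + (1 - p a) * ?E (\<lambda>f. (X a False + S f - (\<Sum>i\<in>insert a A. mu i))^2)"
      by (subst expectation_Pi_pmf_insert[where p=p, OF insert.hyps pa]) (simp only: upd)
    also have "\<dots> = (\<Sum>i\<in>insert a A. p i * (X i True - mu i)^2 + (1 - p i) * (X i False - mu i)^2)"
      unfolding E2 using insert.hyps by (simp add: algebra_simps)
    finally show ?thesis .
  qed
  show ?case using C1 C2 by (simp add: mu_def)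
qed

lemma card_as_sum: "finite A \<Longrightarrow> real (card {i\<in>A. P i}) = (\<Sum>i\<in>A. if P i then 1 else 0)"
  by (simp add: sum.If_cases Int_def conj_commute)

lemma flip_moments:
  fixes x y :: "nat \<Rightarrow> bool" and p :: "nat \<Rightarrow> real"
  assumes "\<And>i. i < n \<Longrightarrow> 0 \<le> p i \<and> p i \<le> 1"
  defines "D \<equiv> map_pmf (\<lambda>f i. x i \<noteq> f i) (Pi_pmf {..<n} False (\<lambda>i. bernoulli_pmf (p i)))"
  defines "M \<equiv> (\<lambda>z::nat\<Rightarrow>bool. real (card {i. i < n \<and> z i \<noteq> y i}))"
  shows "measure_pmf.expectation D M = (\<Sum>i<n. if x i \<noteq> y i then 1 - p i else p i)"
    and "measure_pmf.expectation D (\<lambda>z. (M z - (\<Sum>i<n. if x i \<noteq> y i then 1 - p i else p i))^2)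
          = (\<Sum>i<n. p i * (1 - p i))"
proof -
  define X where "X = (\<lambda>i v. if (x i \<noteq> v) \<noteq> y i then (1::real) else 0)"
  have MX: "M (\<lambda>i. x i \<noteq> f i) = (\<Sum>i<n. X i (f i))" for f
  proof -
    have "{i. i < n \<and> (x i \<noteq> f i) \<noteq> y i} = {i\<in>{..<n}. (x i \<noteq> f i) \<noteq> y i}" by auto
    then show ?thesis unfolding M_def X_def using card_as_sum[of "{..<n}" "\<lambda>i. (x i \<noteq> f i) \<noteq> y i"]
      by simp
  qed
  have mu: "p i * X i True + (1 - p i) * X i False = (if x i \<noteq> y i then 1 - p i else p i)" for i
    unfolding X_def by auto
  have var: "p i * (X i True - (if x i \<noteq> y i then 1 - p i else p i))^2
                 + (1 - p i) * (X i False - (if x i \<noteq> y i then 1 - p i else p i))^2 = p i * (1 - p i)" for i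
    unfolding X_def by (auto simp: power2_eq_square algebra_simps)
  have R: "measure_pmf.expectation (Pi_pmf {..<n} False (\<lambda>i. bernoulli_pmf (p i))) (\<lambda>f. \<Sum>i\<in>{..<n}. X i (f i))
     = (\<Sum>i\<in>{..<n}. p i * X i True + (1 - p i) * X i False)
   \<and> measure_pmf.expectation (Pi_pmf {..<n} False (\<lambda>i. bernoulli_pmf (p i)))
       (\<lambda>f. ((\<Sum>i\<in>{..<n}. X i (f i)) - (\<Sum>i\<in>{..<n}. p i * X i True + (1 - p i) * X i False))^2)
     = (\<Sum>i\<in>{..<n}. p i * (X i True - (p i * X i True + (1 - p i) * X i False))^2
                 + (1 - p i) * (X i False - (p i * X i True + (1 - p i) * X i False))^2)"
    by (rule expectation_Pi_pmf_sum) (use assms(1) in auto)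
  have ED: "measure_pmf.expectation D h = measure_pmf.expectation (Pi_pmf {..<n} False (\<lambda>i. bernoulli_pmf (p i))) (\<lambda>f. h (\<lambda>i. x i \<noteq> f i))" for h :: "_ \<Rightarrow> real"
    unfolding D_def by simp
  show "measure_pmf.expectation D M = (\<Sum>i<n. if x i \<noteq> y i then 1 - p i else p i)"
    unfolding ED MX using conjunct1[OF R] by (simp only: mu)
  show "measure_pmf.expectation D (\<lambda>z. (M z - (\<Sum>i<n. if x i \<noteq> y i then 1 - p i else p i))^2)
          = (\<Sum>i<n. p i * (1 - p i))"
    unfolding ED MX using conjunct2[OF R] by (simp only: mu var)
qed



lemma hdist_sym: "length u = length w \<Longrightarrow> hdist u w = hdist w u"
  unfolding hdist_def by (metis)

lemma hdist_self[simp]: "hdist u u = 0"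
  unfolding hdist_def by simp

lemma hdist_triangle:
  assumes "length u = length z" "length z = length w"
  shows "hdist u w \<le> hdist u z + hdist z w"
proof -
  have "{j. j < length u \<and> u ! j \<noteq> w ! j} \<subseteq>
        {j. j < length u \<and> u ! j \<noteq> z ! j} \<union> {j. j < length z \<and> z ! j \<noteq> w ! j}"
    using assms by auto
  then have "card {j. j < length u \<and> u ! j \<noteq> w ! j} \<le>
        card ({j. j < length u \<and> u ! j \<noteq> z ! j} \<union> {j. j < length z \<and> z ! j \<noteq> w ! j})"
    by (intro card_mono) auto
  also have "\<dots> \<le> card {j. j < length u \<and> u ! j \<noteq> z ! j} + card {j. j < length z \<and> z ! j \<noteq> w ! j}"
    by (rule card_Un_le)
  finally show ?thesis unfolding hdist_def .
qed

lemma hdist_pos_ex: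
  assumes "hdist u w \<noteq> 0"
  shows "\<exists>j < length u. u ! j \<noteq> w ! j"
  using assms unfolding hdist_def by (metis (mono_tags, lifting) Collect_empty_eq card.empty)

lemma lex_le_refl: "lex_le u u" by (simp add: lex_le_def)

lemma lex_le_trans: "lex_le u v \<Longrightarrow> lex_le v w \<Longrightarrow> lex_le u w"
  unfolding lex_le_def
  by (metis lexord_trans trans_def mem_Collect_eq prod.inject singletonD)

lemma lex_le_total: "lex_le u w \<or> lex_le w u"
proof -
  have "(u, w) \<in> lexord {(False, True)} \<or> u = w \<or> (w, u) \<in> lexord {(False, True)}"
    by (rule lexord_linear) auto
  then show ?thesis unfolding lex_le_def by blast
qed

lemma lex_min_exists:
  assumes "finite A" "A \<noteq> {}"
  shows "\<exists>a\<in>A. \<forall>u\<in>A. lex_le a u"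
  using assms
proof (induction A rule: finite_ne_induct)
  case (singleton x)
  then show ?case by (auto simp: lex_le_refl)
next
  case (insert b A)
  then obtain a where a: "a \<in> A" "\<forall>u\<in>A. lex_le a u" by blast
  show ?case
  proof (cases "lex_le b a")
    case True
    then show ?thesis using a by (auto simp: lex_le_refl intro: lex_le_trans)
  next
    case False
    then have "lex_le a b" using lex_le_total by blast
    then show ?thesis using a by auto
  qed
qed

lemma decode_props:
  assumes "finite C0" "C0 \<noteq> {}"
  shows "decode C0 z \<in> C0 \<and> (\<forall>u\<in>C0. hdist (decode C0 z) z \<le> hdist u z)"
proof -
  define P where "P = (\<lambda>w. w \<in> C0 \<and>
     (\<forall>u\<in>C0. hdist w z < hdist u z \<or> (hdist w z = hdist u z \<and> lex_le w u)))"
  define mn where "mn = Min ((\<lambda>u. hdist u z) ` C0)"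
  define M where "M = {w\<in>C0. hdist w z = mn}"
  have mnle: "mn \<le> hdist u z" if "u \<in> C0" for u
    unfolding mn_def using assms that by auto
  have "mn \<in> (\<lambda>u. hdist u z) ` C0" unfolding mn_def using assms by (intro Min_in) auto
  then have "M \<noteq> {}" unfolding M_def by auto
  moreover have "finite M" unfolding M_def using assms by auto
  ultimately obtain a where a: "a \<in> M" "\<forall>u\<in>M. lex_le a u" using lex_min_exists by blast
  have Pa: "P a"
    unfolding P_def
  proof (intro conjI ballI)
    show "a \<in> C0" using a M_def by auto
    fix u assume u: "u \<in> C0"
    show "hdist a z < hdist u z \<or> hdist a z = hdist u z \<and> lex_le a u"
    proof (cases "hdist u z = mn")
      case True
      then have "u \<in> M" using u M_def by auto
      then show ?thesis using a True M_def by auto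
    next
      case False
      then show ?thesis using mnle[OF u] a M_def by auto
    qed
  qed
  have uniq: "w = a" if "P w" for w
  proof -
    have "hdist w z < hdist a z \<or> (hdist w z = hdist a z \<and> lex_le w a)"
      using that Pa unfolding P_def by auto
    moreover have "hdist a z < hdist w z \<or> (hdist a z = hdist w z \<and> lex_le a w)"
      using that Pa unfolding P_def by auto
    ultimately have "lex_le w a" "lex_le a w" by auto
    then show ?thesis unfolding lex_le_def
      by (metis lexord_irreflexive lexord_trans trans_def mem_Collect_eq prod.inject singletonD
          case_prodI empty_iff insert_iff)
  qed
  have "decode C0 z = a"
    unfolding decode_def using Pa uniq unfolding P_def[symmetric] by (rule the_equality)
  then show ?thesis using Pa unfolding P_def by auto
qed



locale tset =
  fixes n :: nat and R :: "nat set" and nb :: "nat \<Rightarrow> nat list" and c d d0 :: nat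
    and C0 :: "bool list set" and \<alpha> \<delta> :: real and y :: "nat \<Rightarrow> bool"
  assumes cpos: "c > 0" and dpos: "d > 0" and apos: "0 < \<alpha>" and ale: "\<alpha> \<le> 1"
    and dlpos: "0 < \<delta>" and dle: "\<delta> \<le> 1"
    and lin: "linear_code d C0" and md: "min_distance C0 d0"
    and dd: "real d0 * \<delta> > 2"
    and ex: "bip_expander n R nb c d \<alpha> \<delta>"
    and yT: "y \<in> tanner R nb C0"
begin

definition "Er x = {i. i < n \<and> x i \<noteq> y i}"
definition "mm x = card (Er x)"
definition "ew x v = card (set (nb v) \<inter> Er x)"
definition "tt = real d0 / 2"
definition "dec x v = decode C0 (map x (nb v))"
definition "hh x v = hdist (dec x v) (map x (nb v))"
definition "av x v = (if 1 \<le> hh x v \<and> real (hh x v) < tt then (tt - real (hh x v)) / (real c * tt) else 0)"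
definition "iv x v = Min {nb v ! j | j. j < length (nb v) \<and> dec x v ! j \<noteq> map x (nb v) ! j}"
definition "sv x v = (if iv x v \<in> Er x then - av x v else av x v)"

lemma finR: "finite R" using ex unfolding bip_expander_def biregular_def by auto
lemma nbv: "v \<in> R \<Longrightarrow> length (nb v) = d \<and> distinct (nb v) \<and> set (nb v) \<subseteq> {..<n}"
  using ex unfolding bip_expander_def biregular_def by auto
lemma degc: "i < n \<Longrightarrow> card {v\<in>R. i \<in> set (nb v)} = c"
  using ex unfolding bip_expander_def biregular_def by auto
lemma C0len: "w \<in> C0 \<Longrightarrow> length w = d"
  using lin unfolding linear_code_def by auto
lemma finC0: "finite C0"
proof -
  have "C0 \<subseteq> {w. length w = d}" using C0len by auto
  then show ?thesis using finite_subset finite_lists_length_eq[of "UNIV :: bool set" d] by auto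
qed
lemma C0ne: "C0 \<noteq> {}" using lin unfolding linear_code_def by auto
lemma mdist: "u \<in> C0 \<Longrightarrow> w \<in> C0 \<Longrightarrow> u \<noteq> w \<Longrightarrow> d0 \<le> hdist u w"
  using md unfolding min_distance_def by auto
lemma yloc: "v \<in> R \<Longrightarrow> map y (nb v) \<in> C0"
  using yT unfolding tanner_def by auto
lemma ttpos: "tt > 1"
proof -
  have "real d0 * \<delta> \<le> real d0" using dle by (simp add: mult_left_le)
  then show ?thesis using dd unfolding tt_def by simp
qed
lemma tdelta: "tt * \<delta> > 1" using dd unfolding tt_def by simp

lemma dec_props: "dec x v \<in> C0 \<and> (\<forall>u\<in>C0. hh x v \<le> hdist u (map x (nb v)))"
  unfolding dec_def hh_def using decode_props[OF finC0 C0ne] by blast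

lemma finEr: "finite (Er x)" unfolding Er_def by auto

lemma local_dist:
  assumes v: "v \<in> R"
  shows "hdist (map x (nb v)) (map y (nb v)) = ew x v"
proof -
  have "{j. j < length (map x (nb v)) \<and> map x (nb v) ! j \<noteq> map y (nb v) ! j} = {j. j < d \<and> x (nb v ! j) \<noteq> y (nb v ! j)}"
    using nbv[OF v] by auto
  moreover have "(\<lambda>j. nb v ! j) ` {j. j < d \<and> x (nb v ! j) \<noteq> y (nb v ! j)} = set (nb v) \<inter> Er x"
  proof -
    have "\<forall>j<length (nb v). nb v ! j < n" using nbv[OF v] nth_mem by blast
    then show ?thesis using nbv[OF v] unfolding Er_def by (auto simp: in_set_conv_nth)
  qed
  moreover have "inj_on (\<lambda>j. nb v ! j) {j. j < d \<and> x (nb v ! j) \<noteq> y (nb v ! j)}"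
    using nbv[OF v] by (intro inj_on_nth) auto
  ultimately show ?thesis unfolding hdist_def ew_def by (metis card_image)
qed

lemma ev0_eq:
  assumes v: "v \<in> R" and "ew x v = 0"
  shows "map x (nb v) = map y (nb v)"
proof -
  have "set (nb v) \<inter> Er x = {}" using assms finEr unfolding ew_def by auto
  then show ?thesis using nbv[OF v] unfolding Er_def by (auto intro!: map_cong)
qed

lemma av_nonneg: "0 \<le> av x v"
  using ttpos cpos unfolding av_def by auto

lemma av_le: "av x v \<le> 1 / real c"
proof -
  have "(tt - real (hh x v)) / (real c * tt) \<le> tt / (real c * tt)"
    using ttpos cpos by (intro divide_right_mono) auto
  also have "\<dots> = 1 / real c" using ttpos by simp
  finally show ?thesis using cpos unfolding av_def by auto
qed

lemma av_pos:
  assumes v: "v \<in> R" and a: "av x v \<noteq> 0"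
  shows "iv x v \<in> set (nb v) \<and> v \<in> unsat R nb C0 x"
proof -
  have h1: "1 \<le> hh x v" using a unfolding av_def by (auto split: if_splits)
  have w: "dec x v \<in> C0" using dec_props by auto
  have lw: "length (dec x v) = d" using C0len[OF w] .
  obtain j where j: "j < length (dec x v)" "dec x v ! j \<noteq> map x (nb v) ! j"
    using hdist_pos_ex[of "dec x v" "map x (nb v)"] h1 unfolding hh_def by auto
  let ?S = "{nb v ! j | j. j < length (nb v) \<and> dec x v ! j \<noteq> map x (nb v) ! j}"
  have "finite ?S" by auto
  moreover have "?S \<noteq> {}" using j lw nbv[OF v] by auto
  ultimately have "iv x v \<in> ?S" unfolding iv_def by (rule Min_in)
  then have "iv x v \<in> set (nb v)" by auto
  moreover have "v \<in> unsat R nb C0 x"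
  proof (rule ccontr)
    assume "v \<notin> unsat R nb C0 x"
    then have "map x (nb v) \<in> C0" using v unfolding unsat_def by auto
    then have "hh x v \<le> 0" using dec_props[of x v] by force
    then show False using h1 by simp
  qed
  ultimately show ?thesis by simp
qed

lemma iv_lt_n: "v \<in> R \<Longrightarrow> av x v \<noteq> 0 \<Longrightarrow> iv x v < n"
  using av_pos nbv by blast

lemma ev0_av: assumes v: "v \<in> R" and "ew x v = 0" shows "av x v = 0"
proof -
  have "map x (nb v) \<in> C0" using ev0_eq[OF assms] yloc[OF v] by metis
  then have "hh x v \<le> 0" using dec_props[of x v] by force
  then show ?thesis unfolding av_def by simp
qed

lemma av_le_ev: assumes v: "v \<in> R" shows "av x v \<le> real (ew x v) / real c"
proof (cases "ew x v = 0")
  case True then show ?thesis using ev0_av[OF v] by simp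
next
  case False
  then have "1 / real c \<le> real (ew x v) / real c" using cpos by (intro divide_right_mono) auto
  then show ?thesis using av_le[of x v] by linarith
qed

lemma sv_bound:
  assumes v: "v \<in> R" and e1: "1 \<le> ew x v"
  shows "sv x v \<le> (real (ew x v) - tt) / (real c * tt)"
proof -
  let ?z = "map x (nb v)" and ?yl = "map y (nb v)" and ?w = "dec x v"
  have w: "?w \<in> C0" and wmin: "\<forall>u\<in>C0. hh x v \<le> hdist u ?z" using dec_props by auto
  have yl: "?yl \<in> C0" using yloc[OF v] .
  have lens: "length ?w = d" "length ?z = d" "length ?yl = d" using C0len[OF w] nbv[OF v] by auto
  have dzy: "hdist ?yl ?z = ew x v" using local_dist[OF v] hdist_sym lens by metis
  have hle: "hh x v \<le> ew x v" using wmin yl dzy by metis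
  have d0t: "real d0 = 2 * tt" unfolding tt_def by simp
  have tri: "d0 \<le> hh x v + ew x v" if "?w \<noteq> ?yl"
  proof -
    have "d0 \<le> hdist ?w ?yl" using mdist[OF w yl that] .
    also have "\<dots> \<le> hdist ?w ?z + hdist ?z ?yl" using lens by (intro hdist_triangle) auto
    finally show ?thesis unfolding hh_def using local_dist[OF v] by simp
  qed
  show ?thesis
  proof (cases "real (ew x v) < tt")
    case True
    have weq: "?w = ?yl"
    proof (rule ccontr)
      assume "?w \<noteq> ?yl"
      then have "real d0 \<le> real (hh x v) + real (ew x v)" using tri by linarith
      then show False using hle True d0t by linarith
    qed
    then have hev: "hh x v = ew x v" unfolding hh_def using dzy by simp
    then have avv: "av x v = (tt - real (ew x v)) / (real c * tt)" using e1 True unfolding av_def by simp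
    then have "av x v \<noteq> 0" using True ttpos cpos by simp
    then have "iv x v \<in> {nb v ! j | j. j < length (nb v) \<and> ?w ! j \<noteq> ?z ! j}"
    proof -
      let ?S = "{nb v ! j | j. j < length (nb v) \<and> ?w ! j \<noteq> ?z ! j}"
      have "hh x v \<noteq> 0" using hev e1 by simp
      then obtain j where j: "j < length ?w" "?w ! j \<noteq> ?z ! j" using hdist_pos_ex unfolding hh_def by blast
      have "?S \<noteq> {}" using j lens nbv[OF v] by auto
      then show ?thesis unfolding iv_def by (intro Min_in) auto
    qed
    then obtain j where j0: "j < length (nb v)" "iv x v = nb v ! j" "?w ! j \<noteq> ?z ! j" by blast
    then have j: "j < d" "iv x v = nb v ! j" "?yl ! j \<noteq> ?z ! j" using weq nbv[OF v] by auto
    have "nb v ! j < n" using nbv[OF v] j(1) nth_mem by blast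
    then have "iv x v \<in> Er x" using j nbv[OF v] unfolding Er_def by auto
    then have "sv x v = - av x v" unfolding sv_def by simp
    also have "\<dots> = (real (ew x v) - tt) / (real c * tt)" using avv by (simp add: minus_divide_left)
    finally show ?thesis by simp
  next
    case False
    have "sv x v \<le> av x v" unfolding sv_def using av_nonneg[of x v] by auto
    also have "av x v \<le> (real (ew x v) - tt) / (real c * tt)"
    proof (cases "av x v = 0")
      case True then show ?thesis using False ttpos cpos by simp
    next
      case ne: False
      then have hlt: "real (hh x v) < tt" and avv: "av x v = (tt - real (hh x v)) / (real c * tt)"
        unfolding av_def by (auto split: if_splits)
      have "?w \<noteq> ?yl"
      proof
        assume "?w = ?yl"
        then have "hh x v = ew x v" unfolding hh_def using dzy by simp
        then show False using hlt False by simp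
      qed
      then have "real d0 \<le> real (hh x v) + real (ew x v)" using tri by linarith
      then have "tt - real (hh x v) \<le> real (ew x v) - tt" using d0t by linarith
      then show ?thesis unfolding avv using ttpos cpos by (intro divide_right_mono) auto
    qed
    finally show ?thesis .
  qed
qed

lemma sv_zero: "v \<in> R \<Longrightarrow> ew x v = 0 \<Longrightarrow> sv x v = 0"
  using ev0_av unfolding sv_def by simp

end



context tset begin

lemma double_count: "(\<Sum>v\<in>R. ew x v) = c * mm x"
proof -
  have "(\<Sum>v\<in>R. ew x v) = (\<Sum>v\<in>R. \<Sum>i\<in>Er x. if i \<in> set (nb v) then 1 else 0)"
  proof (intro sum.cong refl)
    fix v assume "v \<in> R"
    have "set (nb v) \<inter> Er x = {i\<in>Er x. i \<in> set (nb v)}" by auto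
    then show "ew x v = (\<Sum>i\<in>Er x. if i \<in> set (nb v) then 1 else 0)"
      unfolding ew_def using finEr[of x] by (simp add: sum.If_cases Int_def conj_commute)
  qed
  also have "\<dots> = (\<Sum>i\<in>Er x. \<Sum>v\<in>R. if i \<in> set (nb v) then 1 else 0)"
    by (rule sum.swap)
  also have "\<dots> = (\<Sum>i\<in>Er x. c)"
  proof (intro sum.cong refl)
    fix i assume "i \<in> Er x"
    then have "i < n" unfolding Er_def by auto
    have "(\<Sum>v\<in>R. if i \<in> set (nb v) then 1 else 0) = card {v\<in>R. i \<in> set (nb v)}"
      using finR by (simp add: sum.If_cases Int_def conj_commute)
    then show "(\<Sum>v\<in>R. if i \<in> set (nb v) then 1 else 0) = c" using degc[OF \<open>i < n\<close>] by simp
  qed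
  also have "\<dots> = c * mm x" unfolding mm_def by simp
  finally show ?thesis .
qed

lemma nbhd_eq: "nbhd R nb (Er x) = {v\<in>R. 1 \<le> ew x v}"
  unfolding nbhd_def ew_def using finEr[of x] by (auto simp: card_gt_0_iff Suc_le_eq)

lemma expand:
  assumes "real (mm x) \<le> \<alpha> * real n"
  shows "\<delta> * real c * real (mm x) \<le> real (card {v\<in>R. 1 \<le> ew x v})"
proof -
  have "Er x \<subseteq> {..<n}" unfolding Er_def by auto
  then show ?thesis using ex assms unfolding bip_expander_def nbhd_eq[symmetric] mm_def by blast
qed

lemma sum_N: "(\<Sum>v\<in>{v\<in>R. 1 \<le> ew x v}. real (ew x v)) = real c * real (mm x)"
proof -
  have "(\<Sum>v\<in>{v\<in>R. 1 \<le> ew x v}. real (ew x v)) = (\<Sum>v\<in>R. real (ew x v))"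
    using finR by (intro sum.mono_neutral_left) auto
  also have "\<dots> = real c * real (mm x)" using double_count[of x] by (metis of_nat_mult of_nat_sum)
  finally show ?thesis .
qed

lemma drift:
  assumes "real (mm x) \<le> \<alpha> * real n"
  shows "(\<Sum>v\<in>R. sv x v) \<le> - (\<delta> - 1 / tt) * real (mm x)"
proof -
  let ?N = "{v\<in>R. 1 \<le> ew x v}"
  have "(\<Sum>v\<in>R. sv x v) \<le> (\<Sum>v\<in>R. if 1 \<le> ew x v then (real (ew x v) - tt) / (real c * tt) else 0)"
    by (intro sum_mono) (auto simp: sv_bound sv_zero)
  also have "\<dots> = (\<Sum>v\<in>?N. (real (ew x v) - tt) / (real c * tt))"
    using finR by (simp add: sum.If_cases Int_def conj_commute)
  also have "\<dots> = ((\<Sum>v\<in>?N. real (ew x v)) - tt * real (card ?N)) / (real c * tt)"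
    by (simp add: sum_divide_distrib[symmetric] sum_subtractf)
  also have "\<dots> = (real c * real (mm x) - tt * real (card ?N)) / (real c * tt)"
    unfolding sum_N ..
  also have "\<dots> \<le> (real c * real (mm x) - tt * (\<delta> * real c * real (mm x))) / (real c * tt)"
    using expand[OF assms] ttpos cpos by (intro divide_right_mono) auto
  also have "\<dots> = - (\<delta> - 1 / tt) * real (mm x)"
    using ttpos cpos by (simp add: field_simps)
  finally show ?thesis .
qed

lemma fc_eq: "flip_contrib nb C0 c d0 x v i = (if i = iv x v then av x v else 0)"
  unfolding flip_contrib_def Let_def av_def iv_def hh_def dec_def tt_def by auto

lemma fp_eq: "flip_prob R nb C0 c d0 x i = (\<Sum>v\<in>R. if i = iv x v then av x v else 0)"
  unfolding flip_prob_def fc_eq ..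

lemma p_bounds:
  assumes "i < n"
  shows "0 \<le> flip_prob R nb C0 c d0 x i \<and> flip_prob R nb C0 c d0 x i \<le> 1"
proof
  show "0 \<le> flip_prob R nb C0 c d0 x i" unfolding fp_eq by (intro sum_nonneg) (auto simp: av_nonneg)
  have "flip_prob R nb C0 c d0 x i \<le> (\<Sum>v\<in>R. if i \<in> set (nb v) then 1 / real c else 0)"
    unfolding fp_eq
  proof (intro sum_mono)
    fix v assume v: "v \<in> R"
    show "(if i = iv x v then av x v else 0) \<le> (if i \<in> set (nb v) then 1 / real c else 0)"
      using av_pos[OF v, of x] av_le[of x v] av_nonneg[of x v] by auto
  qed
  also have "\<dots> = real (card {v\<in>R. i \<in> set (nb v)}) / real c"
    using finR by (simp add: sum.If_cases Int_def conj_commute)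
  also have "\<dots> = 1" using degc[OF assms] cpos by simp
  finally show "flip_prob R nb C0 c d0 x i \<le> 1" .
qed

lemma Em_eq:
  "(\<Sum>i<n. if x i \<noteq> y i then 1 - flip_prob R nb C0 c d0 x i else flip_prob R nb C0 c d0 x i)
     = real (mm x) + (\<Sum>v\<in>R. sv x v)"
proof -
  let ?p = "flip_prob R nb C0 c d0 x"
  let ?sg = "\<lambda>i. if i \<in> Er x then -1 else (1::real)"
  have "(\<Sum>i<n. if x i \<noteq> y i then 1 - ?p i else ?p i) =
        (\<Sum>i<n. if i \<in> Er x then 1 else 0) + (\<Sum>i<n. ?sg i * ?p i)"
    unfolding sum.distrib[symmetric] by (intro sum.cong refl) (auto simp: Er_def)
  also have "(\<Sum>i<n. if i \<in> Er x then 1 else (0::real)) = real (mm x)"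
  proof -
    have "Er x = {i\<in>{..<n}. i \<in> Er x}" unfolding Er_def by auto
    then show ?thesis unfolding mm_def by (metis card_as_sum finite_lessThan)
  qed
  also have "(\<Sum>i<n. ?sg i * ?p i) = (\<Sum>i<n. \<Sum>v\<in>R. ?sg i * (if i = iv x v then av x v else 0))"
    unfolding fp_eq sum_distrib_left ..
  also have "\<dots> = (\<Sum>v\<in>R. \<Sum>i<n. ?sg i * (if i = iv x v then av x v else 0))"
    by (rule sum.swap)
  also have "\<dots> = (\<Sum>v\<in>R. sv x v)"
  proof (intro sum.cong refl)
    fix v assume v: "v \<in> R"
    have "(\<Sum>i<n. ?sg i * (if i = iv x v then av x v else 0)) = (\<Sum>i<n. if i = iv x v then ?sg i * av x v else 0)"
      by (intro sum.cong refl) auto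
    also have "\<dots> = (if iv x v < n then ?sg (iv x v) * av x v else 0)"
      by (simp add: sum.delta')
    also have "\<dots> = sv x v"
      using iv_lt_n[OF v, of x] unfolding sv_def by auto
    finally show "(\<Sum>i<n. ?sg i * (if i = iv x v then av x v else 0)) = sv x v" .
  qed
  finally show ?thesis .
qed

lemma Var_le:
  "(\<Sum>i<n. flip_prob R nb C0 c d0 x i * (1 - flip_prob R nb C0 c d0 x i)) \<le> real (mm x)"
proof -
  let ?p = "flip_prob R nb C0 c d0 x"
  have "(\<Sum>i<n. ?p i * (1 - ?p i)) \<le> (\<Sum>i<n. ?p i)"
    using p_bounds by (intro sum_mono) (simp add: mult_left_le)
  also have "\<dots> = (\<Sum>v\<in>R. \<Sum>i<n. if i = iv x v then av x v else 0)"
    unfolding fp_eq by (rule sum.swap)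
  also have "\<dots> \<le> (\<Sum>v\<in>R. av x v)"
    by (intro sum_mono) (auto simp: sum.delta' av_nonneg)
  also have "\<dots> \<le> (\<Sum>v\<in>R. real (ew x v) / real c)"
    by (intro sum_mono av_le_ev)
  also have "\<dots> = real (mm x)"
    using double_count[of x] cpos by (simp add: sum_divide_distrib[symmetric] flip: of_nat_sum)
  finally show ?thesis .
qed

lemma unsat_ew: "v \<in> unsat R nb C0 x \<Longrightarrow> 1 \<le> ew x v"
  using ev0_eq yloc unfolding unsat_def by (metis (mono_tags, lifting) less_one mem_Collect_eq not_le)

lemma unsat_card: "real (card (unsat R nb C0 x)) \<le> real c * real (mm x)"
proof -
  have sub: "unsat R nb C0 x \<subseteq> {v\<in>R. 1 \<le> ew x v}" using unsat_ew unfolding unsat_def by auto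
  have "card (unsat R nb C0 x) \<le> card {v\<in>R. 1 \<le> ew x v}"
    using finR by (intro card_mono[OF _ sub]) auto
  also have "real (card {v\<in>R. 1 \<le> ew x v}) = (\<Sum>v\<in>{v\<in>R. 1 \<le> ew x v}. 1)" by simp
  also have "\<dots> \<le> (\<Sum>v\<in>{v\<in>R. 1 \<le> ew x v}. real (ew x v))" by (intro sum_mono) auto
  finally show ?thesis using sum_N[of x] by simp
qed

lemma unsat_mm: "unsat R nb C0 x \<noteq> {} \<Longrightarrow> 1 \<le> mm x"
proof -
  assume "unsat R nb C0 x \<noteq> {}"
  then obtain v where "v \<in> unsat R nb C0 x" by auto
  then have "1 \<le> ew x v" by (rule unsat_ew)
  then have "Er x \<noteq> {}" unfolding ew_def by auto
  then show "1 \<le> mm x" unfolding mm_def using finEr[of x] by (simp add: Suc_le_eq card_gt_0_iff)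
qed

lemma beta_pos: "\<delta> - 1 / tt > 0"
  using tdelta ttpos by (simp add: field_simps)

lemma tanner_zero:
  assumes "real (mm x) \<le> \<alpha> * real n" "unsat R nb C0 x = {}"
  shows "mm x = 0"
proof -
  have "sv x v = 0" if "v \<in> R" for v
    using av_pos[OF that, of x] assms(2) unfolding sv_def by auto
  then have "(\<Sum>v\<in>R. sv x v) = 0" by simp
  then have "0 \<le> - (\<delta> - 1 / tt) * real (mm x)" using drift[OF assms(1)] by simp
  then have "real (mm x) \<le> 0" using beta_pos by (simp add: zero_le_mult_iff)
  then show ?thesis by simp
qed

end


lemma fq_bound:
  fixes u w c :: real
  shows "(max (u - c) 0)^2 \<le> (max (w - c) 0)^2 + 2 * max (w - c) 0 * (u - w) + (u - w)^2"
proof (cases "w \<ge> c")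
  case True
  have mw: "max (w - c) 0 = w - c" using True by simp
  have "(max (u - c) 0)^2 \<le> (u - c)^2"
    by (cases "u \<ge> c") (auto simp: max_def)
  also have "(u - c)^2 = (w - c)^2 + 2 * (w - c) * (u - w) + (u - w)^2"
    by (simp add: power2_eq_square algebra_simps)
  finally show ?thesis unfolding mw .
next
  case False
  have "(max (u - c) 0)^2 \<le> (u - w)^2"
  proof (cases "u \<ge> c")
    case True
    then have "0 \<le> u - c" "u - c \<le> u - w" using False by auto
    then have "(u - c)^2 \<le> (u - w)^2" by (intro power_mono) auto
    then show ?thesis using True by (simp add: max_def)
  qed (auto simp: max_def)
  then show ?thesis using False by (simp add: max_def)
qed

lemma finite_set_rand_flip: "finite (set_pmf (rand_flip n R nb C0 c d0 x))"
  unfolding rand_flip_def by (simp add: finite_set_Pi_pmf_bool)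

lemma exp_lin:
  fixes D :: "'a pmf" and A B C :: real and g h :: "'a \<Rightarrow> real"
  assumes "finite (set_pmf D)"
  shows "measure_pmf.expectation D (\<lambda>z. A + B * g z + C * h z) =
         A + B * measure_pmf.expectation D g + C * measure_pmf.expectation D h"
proof -
  have i: "integrable (measure_pmf D) f" for f :: "'a \<Rightarrow> real"
    using assms by (rule integrable_measure_pmf_finite)
  show ?thesis
    by (subst Bochner_Integration.integral_add[OF i i], subst Bochner_Integration.integral_add[OF i i]) simp
qed

context tset begin

definition "bt = \<delta> - 1 / tt"
definition "lam = (real c + 1) / bt"
definition "cz = real n + lam * \<alpha> * real n"
definition "mu = lam^2 / bt + 1 / (bt^3 * \<alpha>^2)"
definition "fq u = (max (u - cz) 0)^2"
definition "Xf x k = (fq (real k + lam * real (mm x)) + mu * real (mm x)) / (real n)^2"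
definition "Phi s = (case s of (x, k) \<Rightarrow> if real (mm x) > \<alpha> * real n then 1 else min 1 (Xf x k))"

lemma bt_pos: "bt > 0" using beta_pos unfolding bt_def .
lemma bt_le: "bt \<le> 1"
proof -
  have "1 / tt > 0" using ttpos by simp
  then show ?thesis using dle unfolding bt_def by linarith
qed
lemma lam_pos: "lam > 0" using bt_pos unfolding lam_def by simp
lemma fq_nonneg: "fq u \<ge> 0" unfolding fq_def by simp
lemma fq_mono: "u \<le> w \<Longrightarrow> fq u \<le> fq w"
  unfolding fq_def by (intro power_mono) auto
lemma Xf_nonneg: "Xf x k \<ge> 0"
  unfolding Xf_def mu_def using fq_nonneg bt_pos apos by (intro divide_nonneg_nonneg add_nonneg_nonneg mult_nonneg_nonneg) auto
lemma Phi_nonneg: "Phi s \<ge> 0" unfolding Phi_def using Xf_nonneg by (auto split: prod.splits)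
lemma Phi_le1: "Phi s \<le> 1" unfolding Phi_def by (auto split: prod.splits)
lemma mu_eq: "mu * bt = lam^2 + 1 / (bt^2 * \<alpha>^2)"
  unfolding mu_def using bt_pos apos by (simp add: field_simps power2_eq_square power3_eq_cube)

lemma mm_real: "real (mm z) = real (card {i. i < n \<and> z i \<noteq> y i})"
  unfolding mm_def Er_def ..

lemma step_core:
  assumes npos: "n > 0" and ball: "real (mm x) \<le> \<alpha> * real n"
    and U: "unsat R nb C0 x \<noteq> {}"
  shows "measure_pmf.expectation (rand_flip n R nb C0 c d0 x)
           (\<lambda>z. Phi (z, k + card (unsat R nb C0 x) + 1)) \<le> min 1 (Xf x k)"
proof -
  let ?D = "rand_flip n R nb C0 c d0 x"
  let ?p = "flip_prob R nb C0 c d0 x"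
  let ?E = "measure_pmf.expectation ?D"
  define k' where "k' = k + card (unsat R nb C0 x) + 1"
  define M where "M = (\<lambda>z::nat\<Rightarrow>bool. real (card {i. i < n \<and> z i \<noteq> y i}))"
  define a where "a = (\<Sum>i<n. if x i \<noteq> y i then 1 - ?p i else ?p i)"
  define m where "m = real (mm x)"
  define v where "v = (\<Sum>i<n. ?p i * (1 - ?p i))"
  have fin: "finite (set_pmf ?D)" by (rule finite_set_rand_flip)
  have integ: "integrable (measure_pmf ?D) f" for f :: "_ \<Rightarrow> real"
    using fin by (rule integrable_measure_pmf_finite)
  have pb: "\<And>i. i < n \<Longrightarrow> 0 \<le> ?p i \<and> ?p i \<le> 1" by (rule p_bounds)
  have EM: "?E M = a" unfolding M_def a_def rand_flip_def by (rule flip_moments(1)[OF pb])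
  have EV: "?E (\<lambda>z. (M z - a)^2) = v" unfolding M_def a_def v_def rand_flip_def by (rule flip_moments(2)[OF pb])
  have m1: "1 \<le> m" using unsat_mm[OF U] unfolding m_def by simp
  have ale: "a \<le> (1 - bt) * m"
    using Em_eq[of x] drift[OF ball] unfolding a_def m_def bt_def by (simp add: algebra_simps)
  have vle: "v \<le> m" using Var_le[of x] unfolding v_def m_def .
  have v0: "0 \<le> v" unfolding v_def using pb by (intro sum_nonneg) (simp add: mult_nonneg_nonneg)
  have an: "\<alpha> * real n > 0" using apos npos by simp
  have gap: "bt * \<alpha> * real n \<le> \<alpha> * real n - a"
  proof -
    have "(1 - bt) * m \<le> (1 - bt) * (\<alpha> * real n)"
      using ball bt_le unfolding m_def by (intro mult_left_mono) auto
    then show ?thesis using ale by (simp add: algebra_simps)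
  qed
  define G where "G = (\<lambda>z. (fq (real k' + lam * M z) + mu * M z) / (real n)^2 + (M z - a)^2 / (bt * \<alpha> * real n)^2)"
  have pw: "Phi (z, k') \<le> min 1 (G z)" for z
  proof (cases "real (mm z) > \<alpha> * real n")
    case True
    then have "M z - a \<ge> bt * \<alpha> * real n" using gap unfolding M_def mm_real by linarith
    moreover have "bt * \<alpha> * real n > 0" using mult_pos_pos[OF bt_pos an] by (simp add: mult.assoc)
    ultimately have "(bt * \<alpha> * real n)^2 \<le> (M z - a)^2" by (intro power_mono) auto
    moreover have "0 < (bt * \<alpha> * real n)^2" using \<open>bt * \<alpha> * real n > 0\<close> by (rule zero_less_power)
    ultimately have "1 \<le> (M z - a)^2 / (bt * \<alpha> * real n)^2" by (simp add: le_divide_eq)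
    moreover have "0 \<le> (fq (real k' + lam * M z) + mu * M z) / (real n)^2"
      unfolding M_def mu_def using fq_nonneg bt_pos by (intro divide_nonneg_nonneg add_nonneg_nonneg mult_nonneg_nonneg) auto
    ultimately have "1 \<le> G z" unfolding G_def by linarith
    then show ?thesis unfolding Phi_def using True by simp
  next
    case False
    have "Xf z k' \<le> G z" unfolding G_def Xf_def M_def mm_real by simp
    then show ?thesis unfolding Phi_def using False by auto
  qed
  have "?E (\<lambda>z. Phi (z, k')) \<le> ?E (\<lambda>z. min 1 (G z))"
    using pw integ by (intro integral_mono) auto
  also have "\<dots> \<le> min 1 (?E G)"
  proof -
    have "?E (\<lambda>z. min 1 (G z)) \<le> ?E (\<lambda>z. 1)" using integ by (intro integral_mono) auto
    moreover have "?E (\<lambda>z. min 1 (G z)) \<le> ?E G" using integ by (intro integral_mono) auto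
    ultimately show ?thesis by simp
  qed
  also have "?E G \<le> Xf x k"
  proof -
    define w0 where "w0 = real k' + lam * a"
    have fqpw: "fq (real k' + lam * M z) \<le> fq w0 + (2 * max (w0 - cz) 0 * lam) * (M z - a) + lam^2 * (M z - a)^2" for z
      using fq_bound[of "real k' + lam * M z" cz w0] unfolding fq_def w0_def
      by (simp add: power2_eq_square algebra_simps)
    have "?E (\<lambda>z. fq (real k' + lam * M z)) \<le> ?E (\<lambda>z. fq w0 + (2 * max (w0 - cz) 0 * lam) * (M z - a) + lam^2 * (M z - a)^2)"
      using integ fqpw by (intro integral_mono) auto
    also have "\<dots> = fq w0 + (2 * max (w0 - cz) 0 * lam) * ?E (\<lambda>z. M z - a) + lam^2 * v"
      using exp_lin[OF fin] EV by simp
    also have "?E (\<lambda>z. M z - a) = 0" using EM integ by simp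
    finally have Efq: "?E (\<lambda>z. fq (real k' + lam * M z)) \<le> fq w0 + lam^2 * v" by simp
    have "w0 \<le> real k + lam * m"
    proof -
      have cu: "real (card (unsat R nb C0 x)) \<le> real c * m" using unsat_card[of x] unfolding m_def .
      have "lam * a \<le> lam * ((1 - bt) * m)" using ale lam_pos by (intro mult_left_mono) auto
      moreover have "lam * bt = real c + 1" unfolding lam_def using bt_pos by simp
      ultimately have "lam * a \<le> lam * m - (real c + 1) * m" by (simp add: algebra_simps)
      then show ?thesis unfolding w0_def k'_def using cu m1 by (simp add: algebra_simps)
    qed
    then have fw: "fq w0 \<le> fq (real k + lam * m)" by (rule fq_mono)
    have "?E G = (?E (\<lambda>z. fq (real k' + lam * M z)) + mu * a) / (real n)^2 + v / (bt * \<alpha> * real n)^2"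
      unfolding G_def using integ EM EV by (simp add: add_divide_distrib)
    also have "\<dots> \<le> (fq (real k + lam * m) + lam^2 * v + mu * ((1 - bt) * m)) / (real n)^2 + m / (bt * \<alpha> * real n)^2"
    proof -
      have "mu * a \<le> mu * ((1 - bt) * m)" using ale bt_pos unfolding mu_def
        by (intro mult_left_mono) (auto intro!: add_nonneg_nonneg divide_nonneg_nonneg)
      moreover have "v / (bt * \<alpha> * real n)^2 \<le> m / (bt * \<alpha> * real n)^2"
        using vle by (intro divide_right_mono) auto
      ultimately show ?thesis using Efq fw npos vle by (intro add_mono divide_right_mono) auto
    qed
    also have "\<dots> \<le> (fq (real k + lam * m) + lam^2 * m + mu * ((1 - bt) * m)) / (real n)^2 + m / (bt * \<alpha> * real n)^2"
      using vle npos by (intro add_mono divide_right_mono) (auto intro: mult_left_mono)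
    also have "\<dots> = (fq (real k + lam * m) + mu * m) / (real n)^2 + (lam^2 * m + m / (bt^2 * \<alpha>^2) - mu * bt * m) / (real n)^2"
      using npos bt_pos apos by (simp add: field_simps power2_eq_square)
    also have "lam^2 * m + m / (bt^2 * \<alpha>^2) - mu * bt * m = 0"
      using mu_eq by (simp add: algebra_simps)
    finally show ?thesis unfolding Xf_def m_def by simp
  qed
  then have "min 1 (?E G) \<le> min 1 (Xf x k)" by simp
  finally show ?thesis unfolding k'_def .
qed

end


context tset begin

lemma step_super:
  assumes npos: "n > 0"
  shows "(\<integral>\<^sup>+s'. ennreal (Phi s') \<partial>rd_step n R nb C0 c d0 s) \<le> ennreal (Phi s)"
proof (cases s)
  case (Pair x k)
  show ?thesis
  proof (cases "unsat R nb C0 x = {}")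
    case True
    then show ?thesis unfolding Pair rd_step_def by simp
  next
    case U: False
    show ?thesis
    proof (cases "real (mm x) > \<alpha> * real n")
      case True
      have "(\<integral>\<^sup>+s'. ennreal (Phi s') \<partial>rd_step n R nb C0 c d0 s) \<le> (\<integral>\<^sup>+s'. 1 \<partial>rd_step n R nb C0 c d0 s)"
        by (intro nn_integral_mono) (simp add: Phi_le1)
      also have "\<dots> = 1" by simp
      also have "1 = ennreal (Phi s)" unfolding Pair Phi_def using True by simp
      finally show ?thesis .
    next
      case False
      let ?D = "rand_flip n R nb C0 c d0 x"
      let ?k' = "k + card (unsat R nb C0 x) + 1"
      have "(\<integral>\<^sup>+s'. ennreal (Phi s') \<partial>rd_step n R nb C0 c d0 s) = (\<integral>\<^sup>+z. ennreal (Phi (z, ?k')) \<partial>?D)"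
        unfolding Pair rd_step_def using U by simp
      also have "\<dots> = ennreal (measure_pmf.expectation ?D (\<lambda>z. Phi (z, ?k')))"
        by (intro nn_integral_eq_integral integrable_measure_pmf_finite finite_set_rand_flip)
           (auto simp: Phi_nonneg)
      also have "\<dots> \<le> ennreal (min 1 (Xf x k))"
        using step_core[OF npos _ U, of k] False by (intro ennreal_leI) auto
      also have "min 1 (Xf x k) = Phi s" unfolding Pair Phi_def using False by simp
      finally show ?thesis .
    qed
  qed
qed

lemma run_Suc: "rand_decode_run n R nb C0 c d0 (Suc N) x0 =
   bind_pmf (rand_decode_run n R nb C0 c d0 N x0) (rd_step n R nb C0 c d0)"
  unfolding rand_decode_run_def by simp

lemma run_super:
  assumes npos: "n > 0"
  shows "(\<integral>\<^sup>+s. ennreal (Phi s) \<partial>rand_decode_run n R nb C0 c d0 N x0) \<le> ennreal (Phi (x0, n))"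
proof (induction N)
  case 0
  then show ?case unfolding rand_decode_run_def by (simp add: Phi_nonneg)
next
  case (Suc N)
  have "(\<integral>\<^sup>+s. ennreal (Phi s) \<partial>rand_decode_run n R nb C0 c d0 (Suc N) x0) =
        (\<integral>\<^sup>+s. (\<integral>\<^sup>+s'. ennreal (Phi s') \<partial>rd_step n R nb C0 c d0 s) \<partial>rand_decode_run n R nb C0 c d0 N x0)"
    unfolding run_Suc by simp
  also have "\<dots> \<le> (\<integral>\<^sup>+s. ennreal (Phi s) \<partial>rand_decode_run n R nb C0 c d0 N x0)"
    by (intro nn_integral_mono step_super[OF npos])
  finally show ?case using Suc by simp
qed

lemma run_support:
  "s \<in> set_pmf (rand_decode_run n R nb C0 c d0 N x0) \<Longrightarrow>
     unsat R nb C0 (fst s) = {} \<or> snd s \<ge> n + 2 * N"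
proof (induction N arbitrary: s)
  case 0
  then show ?case unfolding rand_decode_run_def by simp
next
  case (Suc N)
  then obtain s0 where s0: "s0 \<in> set_pmf (rand_decode_run n R nb C0 c d0 N x0)"
    "s \<in> set_pmf (rd_step n R nb C0 c d0 s0)"
    unfolding run_Suc by auto
  obtain x k where s0e: "s0 = (x, k)" by (cases s0)
  show ?case
  proof (cases "unsat R nb C0 x = {}")
    case True
    then show ?thesis using s0 unfolding s0e rd_step_def by simp
  next
    case False
    then have "k \<ge> n + 2 * N" using Suc.IH[OF s0(1)] s0e by auto
    moreover have "card (unsat R nb C0 x) \<ge> 1"
      using False finR unfolding unsat_def by (simp add: Suc_le_eq card_gt_0_iff)
    moreover have "snd s = k + card (unsat R nb C0 x) + 1"
      using s0(2) False unfolding s0e rd_step_def by auto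
    ultimately show ?thesis by simp
  qed
qed

definition "KK = nat \<lceil>2 + lam * \<alpha>\<rceil>"

lemma KK_bound: "real (KK * n) \<ge> cz + real n"
proof -
  have "real KK \<ge> 2 + lam * \<alpha>" unfolding KK_def by linarith
  then have "real KK * real n \<ge> (2 + lam * \<alpha>) * real n" by (intro mult_right_mono) auto
  then show ?thesis unfolding cz_def by (simp add: algebra_simps)
qed

lemma final:
  assumes npos: "n > 0" and x0: "real (hdist_n n x0 y) \<le> \<alpha> * real n"
  shows "measure_pmf.prob (rand_decode_run n R nb C0 c d0 (KK * n) x0)
         {(z, k). (\<forall>i<n. z i = y i) \<and> unsat R nb C0 z = {} \<and> k \<le> KK * n}
       \<ge> 1 - mu * \<alpha> / real n"
proof -
  let ?M = "rand_decode_run n R nb C0 c d0 (KK * n) x0"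
  let ?S = "{(z, k). (\<forall>i<n. z i = y i) \<and> unsat R nb C0 z = {} \<and> k \<le> KK * n}"
  have m0: "real (mm x0) \<le> \<alpha> * real n" using x0 unfolding mm_def Er_def hdist_n_def by simp
  have ind: "indicator (UNIV - ?S) s \<le> ennreal (Phi s)" if s: "s \<in> set_pmf ?M" for s
  proof (cases "s \<in> ?S")
    case True then show ?thesis by simp
  next
    case nS: False
    obtain z k where se: "s = (z, k)" by (cases s)
    have "Phi s = 1"
    proof (cases "real (mm z) > \<alpha> * real n")
      case True then show ?thesis unfolding se Phi_def by simp
    next
      case inb: False
      have kbig: "k > KK * n"
      proof (cases "unsat R nb C0 z = {}")
        case True
        then have "mm z = 0" using tanner_zero inb by simp
        then have "Er z = {}" unfolding mm_def using finEr[of z] by simp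
        then have "\<forall>i<n. z i = y i" unfolding Er_def by auto
        then show ?thesis using nS True unfolding se by auto
      next
        case False
        then have "k \<ge> n + 2 * (KK * n)" using run_support[OF s] se by auto
        then show ?thesis using npos by simp
      qed
      have "real k + lam * real (mm z) - cz \<ge> real n"
        using kbig KK_bound lam_pos by (smt (verit, best) of_nat_0_le_iff of_nat_less_iff mult_nonneg_nonneg)
      then have "(real n)^2 \<le> fq (real k + lam * real (mm z))"
        unfolding fq_def by (intro power_mono) auto
      then have "1 \<le> fq (real k + lam * real (mm z)) / (real n)^2" using npos by simp
      moreover have "0 \<le> mu * real (mm z) / (real n)^2"
        unfolding mu_def using bt_pos by (intro divide_nonneg_nonneg mult_nonneg_nonneg add_nonneg_nonneg) auto
      ultimately have "1 \<le> Xf z k" unfolding Xf_def by (simp add: add_divide_distrib)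
      then show ?thesis unfolding se Phi_def using inb by simp
    qed
    then show ?thesis using nS by simp
  qed
  have "emeasure ?M (UNIV - ?S) = (\<integral>\<^sup>+s. indicator (UNIV - ?S) s \<partial>?M)" by simp
  also have "\<dots> \<le> (\<integral>\<^sup>+s. ennreal (Phi s) \<partial>?M)"
    using ind by (intro nn_integral_mono_AE) (simp add: AE_measure_pmf_iff)
  also have "\<dots> \<le> ennreal (Phi (x0, n))" by (rule run_super[OF npos])
  also have "Phi (x0, n) \<le> mu * \<alpha> / real n"
  proof -
    have "real n + lam * real (mm x0) \<le> cz"
      unfolding cz_def using m0 lam_pos by (simp add: mult.assoc mult_left_mono)
    then have "fq (real n + lam * real (mm x0)) = 0" unfolding fq_def by simp
    then have "Xf x0 n = mu * real (mm x0) / (real n)^2" unfolding Xf_def by simp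
    also have "\<dots> \<le> mu * (\<alpha> * real n) / (real n)^2"
      using m0 bt_pos by (intro divide_right_mono mult_left_mono) (auto simp: mu_def intro!: add_nonneg_nonneg divide_nonneg_nonneg)
    also have "\<dots> = mu * \<alpha> / real n" using npos by (simp add: power2_eq_square)
    finally show ?thesis unfolding Phi_def using m0 by auto
  qed
  finally have "emeasure ?M (UNIV - ?S) \<le> ennreal (mu * \<alpha> / real n)" by (simp add: ennreal_leI)
  then have e: "ennreal (measure_pmf.prob ?M (UNIV - ?S)) \<le> ennreal (mu * \<alpha> / real n)"
    by (simp add: measure_pmf.emeasure_eq_measure)
  have bnd: "0 \<le> mu * \<alpha> / real n"
    unfolding mu_def using bt_pos apos by (intro divide_nonneg_nonneg mult_nonneg_nonneg add_nonneg_nonneg) auto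
  have "measure_pmf.prob ?M (UNIV - ?S) \<le> mu * \<alpha> / real n"
    using e ennreal_le_iff[OF bnd] by blast
  moreover have "measure_pmf.prob ?M (UNIV - ?S) = 1 - measure_pmf.prob ?M ?S"
    using measure_pmf.prob_compl[of ?S ?M] by (simp add: Compl_eq_Diff_UNIV)
  ultimately show ?thesis by simp
qed

end


theorem theorem3p6:
  fixes c d d0 :: nat and \<alpha> \<delta> :: real and C0 :: "bool list set"
  assumes "c > 0" "d > 0"
    and "0 < \<alpha>" "\<alpha> \<le> 1" "0 < \<delta>" "\<delta> \<le> 1"
    and "linear_code d C0" "min_distance C0 d0"
    and "real d0 * \<delta> > 2"
  shows "\<exists>K::nat. \<exists>\<epsilon>::nat \<Rightarrow> real. \<epsilon> \<longlonglongrightarrow> 0 \<and>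
    (\<forall>n R nb x y.
       bip_expander n R nb c d \<alpha> \<delta> \<and> y \<in> tanner R nb C0 \<and>
       real (hdist_n n x y) \<le> \<alpha> * real n \<longrightarrow>
       measure_pmf.prob (rand_decode_run n R nb C0 c d0 (K * n) x)
         {(z, k). (\<forall>i<n. z i = y i) \<and> unsat R nb C0 z = {} \<and> k \<le> K * n}
       \<ge> 1 - \<epsilon> n)"
proof -
  define B where "B = \<delta> - 1 / (real d0 / 2)"
  define L where "L = (real c + 1) / B"
  define Mu where "Mu = L^2 / B + 1 / (B^3 * \<alpha>^2)"
  define K where "K = nat \<lceil>2 + L * \<alpha>\<rceil>"
  define \<epsilon> where "\<epsilon> = (\<lambda>n::nat. Mu * \<alpha> / real n)"
  have lim: "\<epsilon> \<longlonglongrightarrow> 0" unfolding \<epsilon>_def by (rule lim_const_over_n)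
  have main: "measure_pmf.prob (rand_decode_run n R nb C0 c d0 (K * n) x)
         {(z, k). (\<forall>i<n. z i = y i) \<and> unsat R nb C0 z = {} \<and> k \<le> K * n}
       \<ge> 1 - \<epsilon> n"
    if h: "bip_expander n R nb c d \<alpha> \<delta>" "y \<in> tanner R nb C0" "real (hdist_n n x y) \<le> \<alpha> * real n"
    for n R nb x y
  proof (cases "n = 0")
    case True
    have R0: "R = {}"
    proof (rule ccontr)
      assume "R \<noteq> {}"
      then obtain v where v: "v \<in> R" by auto
      then have "length (nb v) = d" "set (nb v) \<subseteq> {..<n}"
        using h(1) unfolding bip_expander_def biregular_def by auto
      then show False using True assms(2) by (cases "nb v") auto
    qed
    have U0: "unsat R nb C0 z = {}" for z unfolding unsat_def R0 by simp
    have run: "rand_decode_run n R nb C0 c d0 N x = return_pmf (x, 0)" for N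
    proof (induction N)
      case 0 then show ?case unfolding rand_decode_run_def using True by simp
    next
      case (Suc N)
      have "rand_decode_run n R nb C0 c d0 (Suc N) x =
         bind_pmf (rand_decode_run n R nb C0 c d0 N x) (rd_step n R nb C0 c d0)"
        unfolding rand_decode_run_def by simp
      then show ?case using Suc U0 by (simp add: rd_step_def bind_return_pmf)
    qed
    have "measure_pmf.prob (rand_decode_run n R nb C0 c d0 (K * n) x)
         {(z, k). (\<forall>i<n. z i = y i) \<and> unsat R nb C0 z = {} \<and> k \<le> K * n} = 1"
      unfolding run using True U0 by (simp add: measure_return)
    then show ?thesis unfolding \<epsilon>_def using True by simp
  next
    case False
    interpret tset n R nb c d d0 C0 \<alpha> \<delta> y
      using assms h by unfold_locales auto
    have KK: "KK = K" unfolding KK_def K_def lam_def L_def bt_def B_def tt_def ..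
    have MU: "mu = Mu" unfolding mu_def Mu_def lam_def L_def bt_def B_def tt_def ..
    show ?thesis using final[OF _ h(3)] False unfolding KK MU \<epsilon>_def by simp
  qed
  show ?thesis using lim main by blast
qed


end
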